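(* Let $G=(Q\cup S,E)$ be a split graph, where $Q$ is a clique, $S$ is a stable set, $Q\cap S=\emptyset$, and $Q$ is a maximal clique of $G$ (not contained in any larger clique). Let $T\subseteq Q$ be a non-empty set such that the degrees in $G$ of the vertices of $T$ are pairwise different. Then $\eta(G)\leq |Q|-|T|+1$.
   Context: All graphs are finite, simple and undirected. A graph is split if its vertex set can be partitioned into a clique and a stable set. For a vertex $v$, $N(v)$ is its set of neighbours and $d(v)=|N(v)|$ its degree. For a positive integer $k$, $[k]=\{1,\dots,k\}$. For a labeling $f:V(G)\to[k]$ and $S'\subseteq V(G)$, $f(S')=\sum_{u\in S'}f(u)$. A labeling $f:V(G)\to[k]$ is an additive $k$-coloring if $f(N(u))\neq f(N(v))$ for every edge $(u,v)$ of $G$. The additive chromatic number $\eta(G)$ is the least $k$ for which $G$ has an additive $k$-coloring. *)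

theory Defs
  imports Main
begin

definition simple_graph :: "'a set \<Rightarrow> ('a \<Rightarrow> 'a \<Rightarrow> bool) \<Rightarrow> bool" where
  "simple_graph V E \<longleftrightarrow> finite V \<and> (\<forall>u v. E u v \<longrightarrow> u \<in> V \<and> v \<in> V)
     \<and> (\<forall>u v. E u v \<longrightarrow> E v u) \<and> (\<forall>v. \<not> E v v)"

definition nbhd :: "'a set \<Rightarrow> ('a \<Rightarrow> 'a \<Rightarrow> bool) \<Rightarrow> 'a \<Rightarrow> 'a set" where
  "nbhd V E v = {u \<in> V. E v u}"

definition degree :: "'a set \<Rightarrow> ('a \<Rightarrow> 'a \<Rightarrow> bool) \<Rightarrow> 'a \<Rightarrow> nat" where
  "degree V E v = card (nbhd V E v)"

definition is_clique :: "'a set \<Rightarrow> ('a \<Rightarrow> 'a \<Rightarrow> bool) \<Rightarrow> 'a set \<Rightarrow> bool" where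
  "is_clique V E Q \<longleftrightarrow> Q \<subseteq> V \<and> (\<forall>u\<in>Q. \<forall>v\<in>Q. u \<noteq> v \<longrightarrow> E u v)"

definition is_stable :: "'a set \<Rightarrow> ('a \<Rightarrow> 'a \<Rightarrow> bool) \<Rightarrow> 'a set \<Rightarrow> bool" where
  "is_stable V E S \<longleftrightarrow> S \<subseteq> V \<and> (\<forall>u\<in>S. \<forall>v\<in>S. \<not> E u v)"

definition maximal_clique :: "'a set \<Rightarrow> ('a \<Rightarrow> 'a \<Rightarrow> bool) \<Rightarrow> 'a set \<Rightarrow> bool" where
  "maximal_clique V E Q \<longleftrightarrow> is_clique V E Q \<and>
     (\<forall>Q'. is_clique V E Q' \<and> Q \<subseteq> Q' \<longrightarrow> Q' = Q)"

definition additive_coloring :: "'a set \<Rightarrow> ('a \<Rightarrow> 'a \<Rightarrow> bool) \<Rightarrow> nat \<Rightarrow> ('a \<Rightarrow> nat) \<Rightarrow> bool" where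
  "additive_coloring V E k f \<longleftrightarrow> k \<ge> 1 \<and> (\<forall>v\<in>V. f v \<in> {1..k}) \<and>
     (\<forall>u v. E u v \<longrightarrow> sum f (nbhd V E u) \<noteq> sum f (nbhd V E v))"

definition additive_chromatic_number :: "'a set \<Rightarrow> ('a \<Rightarrow> 'a \<Rightarrow> bool) \<Rightarrow> nat" where
  "additive_chromatic_number V E = (LEAST k. \<exists>f. additive_coloring V E k f)"

end

theory Submission
  imports Defs
begin

theorem mainTheorem9:
  fixes V Q S T :: "'a set" and E :: "'a \<Rightarrow> 'a \<Rightarrow> bool"
  assumes "simple_graph V E"
    and "V = Q \<union> S" and "Q \<inter> S = {}"
    and "is_clique V E Q" and "is_stable V E S"
    and "maximal_clique V E Q"
    and "T \<subseteq> Q" and "T \<noteq> {}"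
    and "inj_on (degree V E) T"
  shows "additive_chromatic_number V E \<le> card Q - card T + 1"
proof -
  note sg = assms(1)[unfolded simple_graph_def]
  define k where "k = card Q - card T + 1"
  have finV: "finite V" using sg by blast
  have finQ: "finite Q" and finS: "finite S" using finV assms(2) by auto
  have finT: "finite T" using finQ assms(7) finite_subset by blast
  define cls where "cls d = {q\<in>Q. degree V E q = d}" for d
  define H where "H d = (SOME h. bij_betw h (cls d) {1..card (cls d)})" for d
  define f where "f v = (if v \<in> S then k else H (degree V E v) v)" for v
  have finc: "finite (cls d)" for d using finQ unfolding cls_def by auto
  have bijH: "bij_betw (H d) (cls d) {1..card (cls d)}" for d
  proof -
    have "\<exists>h. bij_betw h (cls d) {1..card (cls d)}"
      by (rule finite_same_card_bij) (use finc in auto)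
    then show ?thesis unfolding H_def by (rule someI_ex)
  qed
  have clsk: "card (cls d) \<le> k" for d
  proof -
    have "\<forall>x\<in>cls d \<inter> T. \<forall>y\<in>cls d \<inter> T. x = y"
        using assms(9) unfolding cls_def inj_on_def by auto
    then have "card (cls d \<inter> T) \<le> 1"
      using card_le_Suc0_iff_eq[of "cls d \<inter> T"] finc by auto
    moreover have "card (cls d - T) \<le> card (Q - T)"
      by (rule card_mono) (use finQ cls_def in auto)
    moreover have "card (Q - T) = card Q - card T"
      using card_Diff_subset[OF finT assms(7)] .
    moreover have "card (cls d) = card (cls d - T) + card (cls d \<inter> T)"
      using finc card_Diff_subset_Int[of "cls d" T] card_mono[of "cls d" "cls d \<inter> T"] by auto
    ultimately show ?thesis unfolding k_def by linarith
  qed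
  have fQ: "f q \<in> {1..k}" if "q \<in> Q" for q
  proof -
    have "q \<notin> S" using that assms(3) by auto
    moreover have "q \<in> cls (degree V E q)" using that cls_def by auto
    then have "H (degree V E q) q \<in> {1..card (cls (degree V E q))}"
      by (rule bij_betw_apply[OF bijH])
    moreover have "f q = H (degree V E q) q" using \<open>q \<notin> S\<close> unfolding f_def by simp
    ultimately show ?thesis using clsk[of "degree V E q"] by auto
  qed
  have kpos: "k \<ge> 1" unfolding k_def by simp
  have fS: "f s = k" if "s \<in> S" for s using that unfolding f_def by simp
  have fV: "\<forall>v\<in>V. f v \<in> {1..k}"
  proof
    fix v assume "v \<in> V"
    then have "v \<in> Q \<or> v \<in> S" using assms(2) by blast
    then show "f v \<in> {1..k}" using fQ fS kpos by auto
  qed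
  note clq = assms(4)[unfolded is_clique_def]
  note stb = assms(5)[unfolded is_stable_def]
  define SN where "SN q = {s\<in>S. E q s}" for q
  have finSN: "finite (SN q)" for q using finS SN_def by auto
  have nbQ: "nbhd V E q = (Q - {q}) \<union> SN q" if "q \<in> Q" for q
    using that clq sg assms(2) unfolding nbhd_def SN_def by auto
  have sumQ: "sum f (nbhd V E q) + f q = sum f Q + k * card (SN q)" if "q \<in> Q" for q
  proof -
    have d: "(Q - {q}) \<inter> SN q = {}" using assms(3) SN_def by auto
    have "sum f (nbhd V E q) = sum f (Q - {q}) + sum f (SN q)"
      unfolding nbQ[OF that] by (rule sum.union_disjoint) (use finQ finSN d in auto)
    moreover have "sum f (SN q) = k * card (SN q)"
      using fS SN_def by (simp add: mult.commute)
    moreover have "sum f (Q - {q}) + f q = sum f Q"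
      using sum.remove[OF finQ that, of f] by simp
    ultimately show ?thesis by simp
  qed
  have degQ: "degree V E q + 1 = card Q + card (SN q)" if "q \<in> Q" for q
  proof -
    have d: "(Q - {q}) \<inter> SN q = {}" using assms(3) SN_def by auto
    have "degree V E q = card (Q - {q}) + card (SN q)"
      unfolding degree_def nbQ[OF that] by (rule card_Un_disjoint) (use finQ finSN d in auto)
    moreover have "card (Q - {q}) + 1 = card Q"
      using that finQ card_Suc_Diff1 by fastforce
    ultimately show ?thesis by simp
  qed
  have nbS: "nbhd V E s = {q\<in>Q. E s q}" if "s \<in> S" for s
    using that stb sg assms(2) unfolding nbhd_def by auto
  have miss: "\<exists>q0\<in>Q. \<not> E s q0" if "s \<in> S" for s
  proof (rule ccontr)
    assume "\<not> ?thesis"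
    then have all: "\<forall>q\<in>Q. E s q" by blast
    have "is_clique V E (insert s Q)"
      unfolding is_clique_def using clq all sg that assms(2) by auto
    then have "insert s Q = Q" using assms(6) unfolding maximal_clique_def by blast
    then show False using that assms(3) by auto
  qed
  have QS: "sum f (nbhd V E s) < sum f (nbhd V E q)" if "q \<in> Q" "s \<in> S" "E q s" for q s
  proof -
    have sS: "s \<in> S" using that(2) .
    obtain q0 where q0: "q0 \<in> Q" "\<not> E s q0" using miss[OF sS] by blast
    have "sum f (nbhd V E s) + f q0 = sum f (insert q0 (nbhd V E s))"
      using q0 finQ nbS[OF that(2)] by (simp add: add.commute)
    also have "\<dots> \<le> sum f Q"
      by (rule sum_mono2) (use finQ q0 nbS[OF that(2)] in auto)
    finally have A: "sum f (nbhd V E s) + f q0 \<le> sum f Q" .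
    have "s \<in> SN q" using that SN_def by auto
    then have "card (SN q) \<ge> 1" using finSN[of q]
      by (metis One_nat_def Suc_leI card_gt_0_iff empty_iff)
    then have "k * card (SN q) \<ge> k" by simp
    moreover have "f q \<le> k" "f q0 \<ge> 1" using fQ that(1) q0(1) by auto
    ultimately show ?thesis using A sumQ[OF that(1)] by linarith
  qed
  have QQ: "sum f (nbhd V E u) \<noteq> sum f (nbhd V E v)" if "u \<in> Q" "v \<in> Q" "u \<noteq> v" for u v
  proof
    assume eq: "sum f (nbhd V E u) = sum f (nbhd V E v)"
    have key: "k * card (SN u) + f v = k * card (SN v) + f u"
      using sumQ[OF that(1)] sumQ[OF that(2)] eq by linarith
    have fu: "f u \<in> {1..k}" and fv: "f v \<in> {1..k}" using fQ that by auto
    consider "card (SN u) = card (SN v)" | "card (SN u) < card (SN v)" | "card (SN v) < card (SN u)"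
      by linarith
    then show False
    proof cases
      case 1
      then have "f u = f v" using key by simp
      have dd: "degree V E u = degree V E v" using 1 degQ that by (metis add_right_cancel)
      have "u \<in> cls (degree V E u)" "v \<in> cls (degree V E u)" using that dd cls_def by auto
      moreover have "H (degree V E u) u = H (degree V E u) v"
      proof -
        have "u \<notin> S" "v \<notin> S" using that assms(3) by auto
        then show ?thesis using \<open>f u = f v\<close> dd unfolding f_def by simp
      qed
      ultimately show False using bijH[of "degree V E u"] that(3)
        unfolding bij_betw_def inj_on_def by blast
    next
      case 2
      then have "k * (card (SN u) + 1) \<le> k * card (SN v)"
        by (intro mult_le_mono2) simp
      then show False using key fu fv by (simp add: algebra_simps)
    next
      case 3
      then have "k * (card (SN v) + 1) \<le> k * card (SN u)"
        by (intro mult_le_mono2) simp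
      then show False using key fu fv by (simp add: algebra_simps)
    qed
  qed
  have col: "additive_coloring V E k f"
    unfolding additive_coloring_def
  proof (intro conjI allI impI)
    show "1 \<le> k" by (rule kpos)
    show "\<forall>v\<in>V. f v \<in> {1..k}" by (rule fV)
    fix u v assume e: "E u v"
    then have uv: "u \<in> V" "v \<in> V" "E v u" "u \<noteq> v" using sg by auto
    show "sum f (nbhd V E u) \<noteq> sum f (nbhd V E v)"
    proof (cases "u \<in> Q")
      case True
      show ?thesis
      proof (cases "v \<in> Q")
        case True
        then show ?thesis using QQ \<open>u \<in> Q\<close> uv by blast
      next
        case False
        then have "v \<in> S" using uv assms(2) by auto
        then show ?thesis using QS[OF \<open>u \<in> Q\<close> _ e] by fastforce
      qed
    next
      case False
      then have uS: "u \<in> S" using uv assms(2) by auto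
      then have "v \<notin> S" using stb e by auto
      then have "v \<in> Q" using uv assms(2) by auto
      then show ?thesis using QS[OF _ uS uv(3)] by fastforce
    qed
  qed
  have "additive_chromatic_number V E \<le> k"
    unfolding additive_chromatic_number_def by (rule Least_le) (use col in blast)
  then show ?thesis unfolding k_def .
qed

end
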